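(* Fix $\epsilon>0$. For all $u\in\mathbb{R}^k$, $y\in\mathcal{Y}$ and permutations $\pi$ of $[k]$, $\hat\Psi(\pi(u\odot y))=\pi(\hat\Psi(u)\odot y)$, where $(\pi x)_i=x_{\pi_i}$ and $\pi$ and $\odot y$ act on sets elementwise.
   Context: $[k]=\{1,\dots,k\}$, $\mathcal{Y}=\{-1,1\}^k$, $\mathcal{V}=\{-1,0,1\}^k$. $u\odot u'$ entrywise product, $|u|$ entrywise absolute value, $\mathbbm{1}$ all-ones; $\boxed{u}=\mathrm{sign}(u)\odot\min(|u|,\mathbbm{1})$. For $A\subseteq\mathbb{R}^k$, $d_\infty(A,u)=\inf_{a\in A}\|a-u\|_\infty$. For a permutation $\sigma$ and $i\in\{0,\dots,k\}$, $\mathbbm{1}_{\sigma,i}$ is the indicator vector of $\{\sigma_1,\dots,\sigma_i\}$; $V_{\sigma,y}=\{\mathbbm{1}_{\sigma,i}\odot y: i=0,\dots,k\}$; $\mathcal{V}^{\text{face}}=\bigcup_{\sigma,y\in\mathcal{Y}}2^{V_{\sigma,y}}$; $\hat\Psi(u)=\bigcap\{V\in\mathcal{V}^{\text{face}}:d_\infty(\mathrm{conv}\,V,\boxed{u})<\epsilon\}$. *)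

theory Defs
  imports "HOL-Analysis.Analysis" "HOL-Library.Extended_Real"
begin

text \<open>Vectors in R^k are modelled as real^'k for a finite index type 'k (k = CARD('k)).
  Entrywise product is the componentwise multiplication on vec.\<close>

definition sign_vecs :: "(real^'k) set" where
  "sign_vecs = {y. \<forall>i. y $ i = -1 \<or> y $ i = 1}"

definition boxv :: "real^'k \<Rightarrow> real^'k" where
  "boxv u = (\<chi> i. sgn (u $ i) * min \<bar>u $ i\<bar> 1)"

definition linf :: "real^'k \<Rightarrow> real" where
  "linf v = Max (range (\<lambda>i. \<bar>v $ i\<bar>))"

text \<open>d_infinity(A,u) = inf over a in A of the sup-norm distance; +infinity for empty A.\<close>
definition dinf :: "(real^'k) set \<Rightarrow> real^'k \<Rightarrow> ereal" where
  "dinf A u = (INF a\<in>A. ereal (linf (a - u)))"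

text \<open>A permutation sigma of [k] is given as the list [sigma_1,...,sigma_k]: a distinct
  enumeration of all indices.\<close>
definition enum_perm :: "'k list \<Rightarrow> bool" where
  "enum_perm \<sigma> \<longleftrightarrow> distinct \<sigma> \<and> set \<sigma> = (UNIV :: 'k set)"

definition ind_vec :: "('k::finite) list \<Rightarrow> nat \<Rightarrow> real^'k" where
  "ind_vec \<sigma> i = (\<chi> j. if j \<in> set (take i \<sigma>) then 1 else 0)"

definition Vsig :: "('k::finite) list \<Rightarrow> real^'k \<Rightarrow> (real^'k) set" where
  "Vsig \<sigma> y = {ind_vec \<sigma> i * y | i. i \<le> CARD('k)}"

definition Vface :: "(real^'k::finite) set set" where
  "Vface = (\<Union>{Pow (Vsig \<sigma> y) | \<sigma> y. enum_perm \<sigma> \<and> y \<in> sign_vecs})"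

definition Psi_hat :: "real \<Rightarrow> real^'k::finite \<Rightarrow> (real^'k) set" where
  "Psi_hat \<epsilon> u = \<Inter>{V \<in> Vface. dinf (convex hull V) (boxv u) < ereal \<epsilon>}"

definition permv :: "('k \<Rightarrow> 'k) \<Rightarrow> real^'k \<Rightarrow> real^'k" where
  "permv \<pi> x = (\<chi> i. x $ (\<pi> i))"

end

theory Submission
  imports Defs
begin

definition Tm :: "('k \<Rightarrow> 'k) \<Rightarrow> real^'k \<Rightarrow> real^'k \<Rightarrow> real^'k" where
  "Tm \<pi> y v = permv \<pi> (v * y)"

lemma sign_cases: "y \<in> sign_vecs \<Longrightarrow> y $ i = -1 \<or> y $ i = 1"
  by (simp add: sign_vecs_def)

lemma sign_sq: "y \<in> sign_vecs \<Longrightarrow> y $ i * y $ i = 1"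
  using sign_cases[of y i] by auto

lemma sign_abs: "y \<in> sign_vecs \<Longrightarrow> \<bar>y $ i\<bar> = 1"
  using sign_cases[of y i] by auto

lemma Tm_comp: "Tm \<pi> y v $ i = v $ (\<pi> i) * y $ (\<pi> i)"
  by (simp add: Tm_def permv_def)

lemma Tm_linear: "linear (Tm \<pi> y)"
  by (rule linearI) (auto simp: vec_eq_iff Tm_comp algebra_simps)

lemma Tm_inv1:
  assumes "\<pi> permutes UNIV" "y \<in> sign_vecs"
  shows "Tm \<pi> y (Tm (inv \<pi>) (permv \<pi> y) w) = w"
proof -
  have "\<pi> (inv \<pi> i) = i" "inv \<pi> (\<pi> i) = i" for i using permutes_inverses[OF assms(1)] by auto
  then show ?thesis using sign_sq[OF assms(2)]
    by (simp add: vec_eq_iff Tm_comp permv_def algebra_simps)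
qed

lemma Tm_inv2:
  assumes "\<pi> permutes UNIV" "y \<in> sign_vecs"
  shows "Tm (inv \<pi>) (permv \<pi> y) (Tm \<pi> y w) = w"
proof -
  have "\<pi> (inv \<pi> i) = i" "inv \<pi> (\<pi> i) = i" for i using permutes_inverses[OF assms(1)] by auto
  then show ?thesis using sign_sq[OF assms(2)]
    by (simp add: vec_eq_iff Tm_comp permv_def algebra_simps)
qed

lemma sign_permv:
  assumes "\<pi> permutes UNIV" "y \<in> sign_vecs"
  shows "permv \<pi> y \<in> sign_vecs"
  using sign_cases[OF assms(2)] by (simp add: sign_vecs_def permv_def)

lemma Tm_sign:
  assumes "y \<in> sign_vecs" "y' \<in> sign_vecs"
  shows "Tm \<pi> y y' \<in> sign_vecs"
proof -
  have "y' $ \<pi> i * y $ \<pi> i = - 1 \<or> y' $ \<pi> i * y $ \<pi> i = 1" for i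
    using sign_cases[OF assms(1), of "\<pi> i"] sign_cases[OF assms(2), of "\<pi> i"] by auto
  then show ?thesis by (simp add: sign_vecs_def Tm_comp)
qed

lemma linf_Tm:
  assumes "\<pi> permutes UNIV" "y \<in> sign_vecs"
  shows "linf (Tm \<pi> y v) = linf v"
proof -
  have "range (\<lambda>i. \<bar>Tm \<pi> y v $ i\<bar>) = (\<lambda>i. \<bar>v $ i\<bar>) ` range \<pi>"
    by (auto simp: Tm_comp abs_mult sign_abs[OF assms(2)])
  also have "range \<pi> = UNIV" using assms(1) by (simp add: permutes_surj)
  finally show ?thesis by (simp add: linf_def)
qed

lemma dinf_Tm:
  assumes "\<pi> permutes UNIV" "y \<in> sign_vecs"
  shows "dinf (Tm \<pi> y ` C) (Tm \<pi> y b) = dinf C b"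
proof -
  have "\<And>a. Tm \<pi> y a - Tm \<pi> y b = Tm \<pi> y (a - b)"
    by (simp add: vec_eq_iff Tm_comp algebra_simps)
  then show ?thesis unfolding dinf_def image_image
    by (simp add: linf_Tm[OF assms])
qed

lemma boxv_Tm:
  assumes "y \<in> sign_vecs"
  shows "boxv (Tm \<pi> y u) = Tm \<pi> y (boxv u)"
proof -
  have "sgn (a * b) * min \<bar>a * b\<bar> 1 = sgn a * min \<bar>a\<bar> 1 * b" if "b = 1 \<or> b = -1" for a b :: real
    using that by (auto simp: sgn_mult)
  then show ?thesis using assms
    by (auto simp: vec_eq_iff boxv_def Tm_comp sign_vecs_def)
qed

lemma Tm_Vsig:
  assumes "\<pi> permutes UNIV" "y \<in> sign_vecs"
  shows "Tm \<pi> y ` Vsig \<sigma> y' = Vsig (map (inv \<pi>) \<sigma>) (Tm \<pi> y y')"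
proof -
  have iv: "\<pi> (inv \<pi> i) = i" "inv \<pi> (\<pi> i) = i" for i using permutes_inverses[OF assms(1)] by auto
  have mem: "(j \<in> set (take i (map (inv \<pi>) \<sigma>))) = (\<pi> j \<in> set (take i \<sigma>))" for i j
    by (simp add: take_map) (metis iv image_iff)
  have "Tm \<pi> y (ind_vec \<sigma> i * y') = ind_vec (map (inv \<pi>) \<sigma>) i * Tm \<pi> y y'" for i
    by (simp add: vec_eq_iff Tm_comp ind_vec_def mem)
  moreover have "Vsig s z = (\<lambda>i. ind_vec s i * z) ` {..CARD('a)}" for s and z :: "real^'a"
    unfolding Vsig_def by auto
  ultimately show ?thesis by (simp add: image_image)
qed

lemma enum_perm_map:
  assumes "\<pi> permutes UNIV" "enum_perm \<sigma>"
  shows "enum_perm (map (inv \<pi>) \<sigma>)"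
proof -
  have "inv \<pi> permutes UNIV" using assms(1) by (simp add: permutes_inv)
  then have "bij (inv \<pi>)" by (simp add: permutes_bij)
  then show ?thesis using assms(2) unfolding enum_perm_def
    by (auto simp: distinct_map bij_is_inj inj_on_subset bij_is_surj)
qed

lemma Tm_Vface:
  assumes "\<pi> permutes UNIV" "y \<in> sign_vecs" "V \<in> Vface"
  shows "Tm \<pi> y ` V \<in> Vface"
proof -
  obtain \<sigma> y' where h: "enum_perm \<sigma>" "y' \<in> sign_vecs" "V \<subseteq> Vsig \<sigma> y'"
    using assms(3) unfolding Vface_def by auto
  have "Tm \<pi> y ` V \<subseteq> Vsig (map (inv \<pi>) \<sigma>) (Tm \<pi> y y')"
    using h(3) Tm_Vsig[OF assms(1,2)] by blast
  then show ?thesis unfolding Vface_def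
    using enum_perm_map[OF assms(1) h(1)] Tm_sign[OF assms(2) h(2)] by blast
qed

lemma main:
  assumes "\<pi> permutes UNIV" "y \<in> sign_vecs"
  shows "Psi_hat \<epsilon> (Tm \<pi> y u) = Tm \<pi> y ` Psi_hat \<epsilon> u"
proof -
  let ?T = "Tm \<pi> y" and ?S = "Tm (inv \<pi>) (permv \<pi> y)"
  have pi': "inv \<pi> permutes UNIV" using assms(1) by (simp add: permutes_inv)
  have y': "permv \<pi> y \<in> sign_vecs" using sign_permv[OF assms] .
  have TS: "?T (?S w) = w" and ST: "?S (?T w) = w" for w
    using Tm_inv1[OF assms] Tm_inv2[OF assms] by auto
  have dT: "dinf (convex hull (?T ` V)) (boxv (?T u)) = dinf (convex hull V) (boxv u)" for V
    by (simp add: convex_hull_linear_image[OF Tm_linear, symmetric] boxv_Tm[OF assms(2)] dinf_Tm[OF assms])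
  let ?F = "{V \<in> Vface. dinf (convex hull V) (boxv u) < ereal \<epsilon>}"
  have eqF: "{W \<in> Vface. dinf (convex hull W) (boxv (?T u)) < ereal \<epsilon>} = (\<lambda>V. ?T ` V) ` ?F"
  proof (intro equalityI subsetI)
    fix W assume W: "W \<in> {W \<in> Vface. dinf (convex hull W) (boxv (?T u)) < ereal \<epsilon>}"
    have eq: "?T ` (?S ` W) = W" by (simp add: image_image TS)
    have W1: "W \<in> Vface" and W2: "dinf (convex hull W) (boxv (?T u)) < ereal \<epsilon>" using W by auto
    have "?S ` W \<in> Vface" using Tm_Vface[OF pi' y' W1] .
    moreover have "dinf (convex hull (?S ` W)) (boxv u) < ereal \<epsilon>"
      using W2 dT[of "?S ` W"] unfolding eq by simp
    ultimately have "?S ` W \<in> ?F" by blast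
    moreover have "W = (\<lambda>V. ?T ` V) (?S ` W)" by (rule sym[OF eq])
    ultimately show "W \<in> (\<lambda>V. ?T ` V) ` ?F" by (rule rev_image_eqI)
  next
    fix W assume "W \<in> (\<lambda>V. ?T ` V) ` ?F"
    then obtain V where "V \<in> ?F" "W = ?T ` V" by auto
    then show "W \<in> {W \<in> Vface. dinf (convex hull W) (boxv (?T u)) < ereal \<epsilon>}"
      using Tm_Vface[OF assms, of V] dT[of V] by simp
  qed
  have "\<Inter>((\<lambda>V. ?T ` V) ` ?F) = ?T ` \<Inter>?F"
  proof (intro equalityI subsetI)
    fix x assume x: "x \<in> \<Inter>((\<lambda>V. ?T ` V) ` ?F)"
    have Sx: "?S x \<in> \<Inter>?F"
    proof
      fix V assume "V \<in> ?F"
      then have "x \<in> ?T ` V" using x by blast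
      then show "?S x \<in> V" using ST by auto
    qed
    have "x = ?T (?S x)" using TS by simp
    then show "x \<in> ?T ` \<Inter>?F" using Sx by (rule image_eqI)
  next
    fix x assume "x \<in> ?T ` \<Inter>?F"
    then show "x \<in> \<Inter>((\<lambda>V. ?T ` V) ` ?F)" by blast
  qed
  then show ?thesis unfolding Psi_hat_def eqF by simp
qed

theorem lemma12:
  fixes \<epsilon> :: real and u y :: "real^'k::finite" and \<pi> :: "'k \<Rightarrow> 'k"
  assumes "\<epsilon> > 0" and "y \<in> sign_vecs" and "\<pi> permutes UNIV"
  shows "Psi_hat \<epsilon> (permv \<pi> (u * y)) = (\<lambda>v. permv \<pi> (v * y)) ` Psi_hat \<epsilon> u"
  using main[OF assms(3,2), of \<epsilon> u] unfolding Tm_def by simp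

end
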